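(* Let $(R,\mathfrak{m},k)$ be a commutative Noetherian local ring and let $n$ be a positive integer. Let $x_1,\dots,x_n,y\in\mathfrak{m}$ be elements such that the ideal $(x_1,x_2,\dots,x_n,y)$ has minimal number of generators $n+1$. Let $p,q\in R$ satisfy $(x_1+py,x_2,\dots,x_n)=(x_1+qy,x_2,\dots,x_n)$ as ideals of $R$. Then $\overline p=\overline q$ in $k=R/\mathfrak{m}$. *)

theory Defs
  imports Main
begin

definition is_ideal :: "'a::comm_ring_1 set \<Rightarrow> bool" where
  "is_ideal I \<longleftrightarrow> 0 \<in> I \<and> (\<forall>x\<in>I. \<forall>y\<in>I. x + y \<in> I) \<and> (\<forall>r. \<forall>x\<in>I. r * x \<in> I)"

definition ideal_gen :: "'a::comm_ring_1 set \<Rightarrow> 'a set" where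
  "ideal_gen S = \<Inter>{I. is_ideal I \<and> S \<subseteq> I}"

definition noetherian_ring :: "'a::comm_ring_1 itself \<Rightarrow> bool" where
  "noetherian_ring _ \<longleftrightarrow> (\<forall>I::'a set. is_ideal I \<longrightarrow> (\<exists>G. finite G \<and> I = ideal_gen G))"

definition maximal_ideal :: "'a::comm_ring_1 set \<Rightarrow> bool" where
  "maximal_ideal m \<longleftrightarrow> is_ideal m \<and> m \<noteq> UNIV \<and>
     (\<forall>I. is_ideal I \<and> m \<subseteq> I \<longrightarrow> I = m \<or> I = UNIV)"

definition local_ring :: "'a::comm_ring_1 set \<Rightarrow> bool" where
  "local_ring m \<longleftrightarrow> maximal_ideal m \<and> (\<forall>I. maximal_ideal I \<longrightarrow> I = m)"

definition min_gens :: "'a::comm_ring_1 set \<Rightarrow> nat" where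
  "min_gens I = (LEAST n. \<exists>G. finite G \<and> card G = n \<and> ideal_gen G = I)"

end

theory Submission
  imports Defs
begin

lemma ideal_gen_ideal: "is_ideal (ideal_gen S)"
  unfolding ideal_gen_def is_ideal_def by auto

lemma ideal_gen_sup: "S \<subseteq> ideal_gen S"
  unfolding ideal_gen_def by auto

lemma ideal_gen_least: "is_ideal I \<Longrightarrow> S \<subseteq> I \<Longrightarrow> ideal_gen S \<subseteq> I"
  unfolding ideal_gen_def by auto

lemma ideal_add: "is_ideal I \<Longrightarrow> a \<in> I \<Longrightarrow> b \<in> I \<Longrightarrow> a + b \<in> I"
  unfolding is_ideal_def by auto

lemma ideal_mult: "is_ideal I \<Longrightarrow> a \<in> I \<Longrightarrow> r * a \<in> I"
  unfolding is_ideal_def by auto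

lemma ideal_diff: "is_ideal I \<Longrightarrow> a \<in> I \<Longrightarrow> b \<in> I \<Longrightarrow> a - b \<in> I"
proof -
  assume I: "is_ideal I" "a \<in> I" "b \<in> I"
  have "(-1) * b \<in> I" using I ideal_mult by blast
  hence "a + (-1) * b \<in> I" using I ideal_add by blast
  thus ?thesis by simp
qed

lemma local_unit:
  fixes m :: "'a::comm_ring_1 set"
  assumes loc: "local_ring m" and u: "u \<notin> m"
  shows "\<exists>v. u * v = 1"
proof (rule ccontr)
  assume nu: "\<not> (\<exists>v. u * v = 1)"
  define A where "A = {I::'a set. is_ideal I \<and> u \<in> I \<and> 1 \<notin> I}"
  define U where "U = {r * u | r. True}"
  have h0: "0 \<in> U" unfolding U_def by (auto intro: exI[of _ 0])
  have hu: "u \<in> U" unfolding U_def by (auto intro: exI[of _ 1])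
  have h1: "1 \<notin> U" using nu unfolding U_def by (auto simp: mult.commute)
  have hadd: "\<forall>a\<in>U. \<forall>b\<in>U. a + b \<in> U"
  proof (intro ballI)
    fix a b assume "a \<in> U" "b \<in> U"
    then obtain r s where "a = r * u" "b = s * u" unfolding U_def by auto
    then have "a + b = (r + s) * u" by (simp add: distrib_right)
    then show "a + b \<in> U" unfolding U_def by auto
  qed
  have hmul: "\<forall>t. \<forall>a\<in>U. t * a \<in> U"
  proof (intro allI ballI)
    fix t a assume "a \<in> U"
    then obtain r where "a = r * u" unfolding U_def by auto
    then have "t * a = (t * r) * u" by (simp add: mult.assoc)
    then show "t * a \<in> U" unfolding U_def by auto
  qed
  have mulid: "U \<in> A" unfolding A_def is_ideal_def using h0 hu h1 hadd hmul by blast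
  have "\<exists>M\<in>A. \<forall>X\<in>A. M \<subseteq> X \<longrightarrow> X = M"
  proof (rule subset_Zorn_nonempty)
    show "A \<noteq> {}" using mulid by auto
  next
    fix C assume Cne: "C \<noteq> {}" and ch: "subset.chain A C"
    have CA: "C \<subseteq> A" and cmp: "\<forall>X\<in>C. \<forall>Y\<in>C. X \<subseteq> Y \<or> Y \<subseteq> X"
      using ch unfolding subset.chain_def by auto
    obtain X0 where X0: "X0 \<in> C" using Cne by auto
    have "is_ideal (\<Union>C)"
      unfolding is_ideal_def
    proof (intro conjI ballI allI)
      show "0 \<in> \<Union>C" using X0 CA unfolding A_def is_ideal_def by auto
    next
      fix a b assume "a \<in> \<Union>C" "b \<in> \<Union>C"
      then obtain X Y where XY: "X \<in> C" "Y \<in> C" "a \<in> X" "b \<in> Y" by auto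
      show "a + b \<in> \<Union>C"
      proof (cases "X \<subseteq> Y")
        case True
        then show ?thesis using XY CA ideal_add[of Y a b] unfolding A_def by auto
      next
        case False
        then have "Y \<subseteq> X" using cmp XY by auto
        then show ?thesis using XY CA ideal_add[of X a b] unfolding A_def by auto
      qed
    next
      fix r a assume "a \<in> \<Union>C"
      then obtain X where "X \<in> C" "a \<in> X" by auto
      then show "r * a \<in> \<Union>C" using CA ideal_mult[of X a r] unfolding A_def by auto
    qed
    moreover have "u \<in> \<Union>C" using X0 CA unfolding A_def by auto
    moreover have "1 \<notin> \<Union>C" using CA unfolding A_def by auto
    ultimately show "\<Union>C \<in> A" unfolding A_def by auto
  qed
  then obtain M where M: "M \<in> A" and Mmax: "\<forall>X\<in>A. M \<subseteq> X \<longrightarrow> X = M" by auto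
  have "maximal_ideal M"
    unfolding maximal_ideal_def
  proof (intro conjI allI impI)
    show "is_ideal M" using M unfolding A_def by auto
    show "M \<noteq> UNIV" using M unfolding A_def by auto
    fix I assume I: "is_ideal I \<and> M \<subseteq> I"
    show "I = M \<or> I = UNIV"
    proof (cases "1 \<in> I")
      case True
      then have "I = UNIV" using I ideal_mult[of I 1] by fastforce
      then show ?thesis by auto
    next
      case False
      then have "I \<in> A" using I M unfolding A_def by auto
      then show ?thesis using Mmax I by auto
    qed
  qed
  then have "M = m" using loc unfolding local_ring_def by auto
  then show False using M u unfolding A_def by auto
qed

theorem lemma3p7:
  fixes m :: "'a::comm_ring_1 set" and x :: "nat \<Rightarrow> 'a" and y p q :: 'a and n :: nat
  assumes "noetherian_ring TYPE('a)"
    and "local_ring m"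
    and "n \<ge> 1"
    and "\<forall>i\<in>{1..n}. x i \<in> m"
    and "y \<in> m"
    and "min_gens (ideal_gen (x ` {1..n} \<union> {y})) = n + 1"
    and "ideal_gen (insert (x 1 + p * y) (x ` {2..n}))
         = ideal_gen (insert (x 1 + q * y) (x ` {2..n}))"
  shows "p - q \<in> m"
proof (rule ccontr)
  assume pq: "p - q \<notin> m"
  then obtain v where v: "(p - q) * v = 1" using local_unit assms(2) by blast
  define G where "G = insert (x 1 + q * y) (x ` {2..n})"
  define J where "J = ideal_gen G"
  define I where "I = ideal_gen (x ` {1..n} \<union> {y})"
  have Ji: "is_ideal J" unfolding J_def by (rule ideal_gen_ideal)
  have Ii: "is_ideal I" unfolding I_def by (rule ideal_gen_ideal)
  have a: "x 1 + p * y \<in> J"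
    using assms(7) ideal_gen_sup[of "insert (x 1 + p * y) (x ` {2..n})"] unfolding J_def G_def by auto
  have b: "x 1 + q * y \<in> J" using ideal_gen_sup[of G] unfolding J_def G_def by auto
  have "(x 1 + p * y) - (x 1 + q * y) \<in> J" using a b Ji ideal_diff by blast
  hence "(p - q) * y \<in> J" by (simp add: algebra_simps)
  hence "v * ((p - q) * y) \<in> J" using Ji ideal_mult by blast
  hence yJ: "y \<in> J" using v by (metis mult.assoc mult.commute mult_1)
  have "(x 1 + q * y) - q * y \<in> J" using b yJ Ji ideal_diff ideal_mult by blast
  hence x1J: "x 1 \<in> J" by simp
  have "x ` {2..n} \<subseteq> J" using ideal_gen_sup[of G] unfolding J_def G_def by auto
  hence "x ` {1..n} \<union> {y} \<subseteq> J" using x1J yJ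
    by (auto, metis One_nat_def Suc_1 atLeastAtMost_iff image_subset_iff le_antisym not_less_eq_eq)
  hence IJ: "I \<subseteq> J" unfolding I_def using ideal_gen_least Ji by blast
  have xI: "x ` {1..n} \<union> {y} \<subseteq> I" unfolding I_def by (rule ideal_gen_sup)
  have "x 1 \<in> I" using xI assms(3) by auto
  moreover have "y \<in> I" using xI by auto
  ultimately have "x 1 + q * y \<in> I" using Ii ideal_add ideal_mult by blast
  moreover have "x ` {2..n} \<subseteq> I" using xI by auto
  ultimately have "G \<subseteq> I" unfolding G_def by auto
  hence "J \<subseteq> I" unfolding J_def using ideal_gen_least Ii by blast
  hence IJe: "ideal_gen G = I" using IJ unfolding J_def by auto
  have fG: "finite G" unfolding G_def by auto
  have "card G \<le> Suc (card (x ` {2..n}))" unfolding G_def by (rule card_insert_le_m1) auto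
  also have "card (x ` {2..n}) \<le> card {2..n}" by (rule card_image_le) auto
  finally have cG: "card G \<le> n" using assms(3) by auto
  have "min_gens I \<le> card G"
    unfolding min_gens_def by (rule Least_le) (use fG IJe in auto)
  then show False using cG assms(6) unfolding I_def by auto
qed

end
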